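(* Let $\mu>0$, $\alpha>0$, $f(x)=xe^{-x}$ for $x\ge 0$, and let $\beta\in L^\infty_+(0,+\infty)$ satisfy $\int_0^{\infty}\beta(a)e^{-\mu a}\,da=1$. Let $u_0\in L^1_+((0,+\infty),\mathbb{R})$, set $U_0=\int_0^\infty u_0(a)\,da$ and $\Lambda=\frac{\alpha}{\mu}\sup_{x\ge 0}f(x)$. Let $u(t,a)$ be the solution of $$\partial_t u+\partial_a u=-\mu u\ (t>0,a>0),\qquad u(t,0)=\alpha f\Big(\int_0^\infty\beta(a)u(t,a)\,da\Big)\ (t>0),\qquad u(0,\cdot)=u_0,$$ and for $\delta_+=1$ and $\delta_-=e^{-\|\beta\|_{L^\infty}\max(U_0,\Lambda)}$ let $u_\pm(t,a)$ be the solutions of the linear problems $$\partial_t u_\pm+\partial_a u_\pm=-\mu u_\pm\ (a\ge 0,t\ge 0),\qquad u_\pm(t,0)=\alpha\delta_\pm\int_0^{\infty}\beta(a)u_\pm(t,a)\,da,\qquad u_\pm(0,\cdot)=u_0.$$ Then $u_-(t,a)\le u(t,a)\le u_+(t,a)$ for all $t\ge 0$ and almost every $a\ge 0$.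
   Context: Solutions are understood in the integrated (along characteristics) sense: $u(t,a)=e^{-\mu t}u_0(a-t)$ if $a\ge t$ and $u(t,a)=e^{-\mu a}b(t-a)$ if $a\le t$, where $b$ is the unique continuous solution of the Volterra equation $b(t)=\alpha f\big(\int_t^\infty\beta(a)e^{-\mu t}u_0(a-t)\,da+\int_0^t\beta(a)e^{-\mu a}b(t-a)\,da\big)$, $t\ge 0$. The linear problems are solved in the same way with $\alpha f(\cdot)$ replaced by $\alpha\delta_\pm\,(\cdot)$. *)

theory Defs
  imports "HOL-Analysis.Analysis"
begin

definition f_ricker :: "real \<Rightarrow> real" where
  "f_ricker x = x * exp (- x)"

definition Linf_norm :: "(real \<Rightarrow> real) \<Rightarrow> real" where
  "Linf_norm g = Inf {C. AE a in lborel. a > 0 \<longrightarrow> \<bar>g a\<bar> \<le> C}"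

text \<open>The argument of the boundary condition, expressed via the birth rate b
  (integrated along characteristics).\<close>
definition birth_input ::
  "(real \<Rightarrow> real) \<Rightarrow> real \<Rightarrow> (real \<Rightarrow> real) \<Rightarrow> (real \<Rightarrow> real) \<Rightarrow> real \<Rightarrow> real" where
  "birth_input \<beta> \<mu> u0 b t =
     (LINT a:{t..}|lborel. \<beta> a * exp (- \<mu> * t) * u0 (a - t))
   + (LINT a:{0..t}|lborel. \<beta> a * exp (- \<mu> * a) * b (t - a))"

definition is_birth_rate ::
  "(real \<Rightarrow> real) \<Rightarrow> real \<Rightarrow> (real \<Rightarrow> real) \<Rightarrow> (real \<Rightarrow> real) \<Rightarrow> (real \<Rightarrow> real) \<Rightarrow> bool" where
  "is_birth_rate G \<mu> \<beta> u0 b \<longleftrightarrow>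
     continuous_on {0..} b \<and> (\<forall>t\<ge>0. b t = G (birth_input \<beta> \<mu> u0 b t))"

definition age_sol ::
  "real \<Rightarrow> (real \<Rightarrow> real) \<Rightarrow> (real \<Rightarrow> real) \<Rightarrow> real \<Rightarrow> real \<Rightarrow> real" where
  "age_sol \<mu> u0 b t a =
     (if a \<ge> t then exp (- \<mu> * t) * u0 (a - t) else exp (- \<mu> * a) * b (t - a))"

end

theory Submission
  imports Defs
begin


lemma cont_set_integrable:
  fixes g :: "real \<Rightarrow> real"
  assumes "continuous_on {x..y} g"
  shows "set_integrable lborel {x..y} g"
  unfolding set_integrable_def using borel_integrable_compact[OF compact_Icc assms] .

lemma exp_integral:
  fixes c t :: real assumes c: "c > 0" and t: "t \<ge> 0"
  shows "(LINT a:{0..t}|lborel. exp (- c * a)) = (1 - exp (- c * t)) / c"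
proof -
  have si: "set_integrable lborel {0..t} (\<lambda>a. exp (- c * a))"
    by (rule cont_set_integrable) (intro continuous_intros)
  have "((\<lambda>a. exp (- c * a)) has_integral ((- exp (- c * t) / c) - (- exp (- c * 0) / c))) {0..t}"
  proof (rule fundamental_theorem_of_calculus[OF t])
    fix x assume "x \<in> {0..t}"
    show "((\<lambda>a. - exp (- c * a) / c) has_vector_derivative exp (- c * x)) (at x within {0..t})"
      using c by (auto intro!: derivative_eq_intros simp: has_real_derivative_iff_has_vector_derivative[symmetric])
  qed
  then have "integral {0..t} (\<lambda>a. exp (- c * a)) = (1 - exp (- c * t)) / c"
    using c by (simp add: integral_unique field_simps)
  then show ?thesis using set_borel_integral_eq_integral(2)[OF si] by simp
qed



lemma conv_integrable:
  fixes k g :: "real \<Rightarrow> real"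
  assumes k: "k \<in> borel_measurable lborel" and kb: "AE a in lborel. a > 0 \<longrightarrow> \<bar>k a\<bar> \<le> C"
    and g: "continuous_on {0..t} g"
  shows "set_integrable lborel {0..t} (\<lambda>a. k a * g (t - a))"
proof -
  have h: "continuous_on {0..t} (\<lambda>a. g (t - a))"
    by (rule continuous_on_compose2[OF g]) (auto intro!: continuous_intros)
  obtain B where "\<forall>x\<in>(\<lambda>a. g (t - a)) ` {0..t}. norm x \<le> B"
    using compact_imp_bounded[OF compact_continuous_image[OF h compact_Icc]]
    unfolding bounded_iff by blast
  then have B: "\<And>a. a \<in> {0..t} \<Longrightarrow> \<bar>g (t - a)\<bar> \<le> B" by auto
  show ?thesis
  proof (rule set_integrable_bound[where f = "\<lambda>_. C * B"])
    show "set_integrable lborel {0..t} (\<lambda>_. C * B)"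
      by (rule cont_set_integrable) simp
    have "(\<lambda>x. indicator {0..t} x *\<^sub>R g (t - x)) \<in> borel_measurable borel"
      by (rule borel_measurable_continuous_on_indicator[OF _ h]) simp
    then have m: "(\<lambda>x. indicator {0..t} x *\<^sub>R g (t - x)) \<in> borel_measurable lborel"
      by simp
    have "(\<lambda>x. k x * (indicator {0..t} x *\<^sub>R g (t - x))) \<in> borel_measurable lborel"
      using k m by measurable
    then show "set_borel_measurable lborel {0..t} (\<lambda>a. k a * g (t - a))"
      unfolding set_borel_measurable_def by (simp add: mult.left_commute)
    show "AE x in lborel. x \<in> {0..t} \<longrightarrow> norm (k x * g (t - x)) \<le> norm (C * B)"
      using kb AE_lborel_singleton[of 0]
    proof eventually_elim
      case (elim x)
      show ?case
      proof
        assume x: "x \<in> {0..t}"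
        then have "\<bar>k x\<bar> \<le> C" using elim by auto
        moreover have "\<bar>g (t - x)\<bar> \<le> B" using B x by auto
        ultimately have "\<bar>k x\<bar> * \<bar>g (t - x)\<bar> \<le> C * B"
          by (intro mult_mono) auto
        then have "\<bar>k x * g (t - x)\<bar> \<le> C * B" by (simp add: abs_mult)
        then show "norm (k x * g (t - x)) \<le> norm (C * B)"
          unfolding real_norm_def by (rule order_trans[OF _ abs_ge_self])
      qed
    qed
  qed
qed



lemma gronwall_conv:
  fixes k w :: "real \<Rightarrow> real"
  assumes k: "k \<in> borel_measurable lborel" and kb: "AE a in lborel. a > 0 \<longrightarrow> 0 \<le> k a \<and> k a \<le> C"
    and C: "C \<ge> 0" and L: "L \<ge> 0"
    and w: "continuous_on {0..T} w" and wnn: "\<And>t. t \<in> {0..T} \<Longrightarrow> 0 \<le> w t"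
    and ineq: "\<And>t. t \<in> {0..T} \<Longrightarrow> w t \<le> L * (LINT a:{0..t}|lborel. k a * w (t - a))"
    and s: "s \<in> {0..T}"
  shows "w s = 0"
proof -
  have ne: "{0..T} \<noteq> {}" using s by auto
  define g where "g = L * C + 1"
  have g: "g > 0" using L C by (simp add: g_def add_nonneg_pos)
  define v where "v t = exp (- g * t) * w t" for t
  have vc: "continuous_on {0..T} v" unfolding v_def by (intro continuous_intros w)
  obtain t0 where t0: "t0 \<in> {0..T}" and mx: "\<And>y. y \<in> {0..T} \<Longrightarrow> v y \<le> v t0"
    using continuous_attains_sup[OF compact_Icc ne vc] by blast
  define M where "M = v t0"
  have M0: "M \<ge> 0" using wnn[OF t0] by (simp add: M_def v_def)
  have wle: "w y \<le> M * exp (g * y)" if y: "y \<in> {0..T}" for y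
  proof -
    have "w y = exp (g * y) * v y" by (simp add: v_def exp_minus_inverse[symmetric] exp_add[symmetric])
    also have "\<dots> \<le> exp (g * y) * M" using mx[OF y] by (simp add: M_def)
    finally show ?thesis by (simp add: mult.commute)
  qed
  have kb': "AE a in lborel. a > 0 \<longrightarrow> \<bar>k a\<bar> \<le> C" using kb by eventually_elim auto
  have wc0: "continuous_on {0..t0} w" using t0 by (intro continuous_on_subset[OF w]) auto
  have int1: "set_integrable lborel {0..t0} (\<lambda>a. k a * w (t0 - a))"
    by (rule conv_integrable[OF k kb' wc0])
  have int2: "set_integrable lborel {0..t0} (\<lambda>a. (C * M * exp (g * t0)) * exp (- g * a))"
    by (rule cont_set_integrable) (intro continuous_intros)
  have "(LINT a:{0..t0}|lborel. k a * w (t0 - a)) \<le> (LINT a:{0..t0}|lborel. (C * M * exp (g * t0)) * exp (- g * a))"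
  proof (rule set_integral_mono_AE[OF int1 int2])
    show "AE x\<in>{0..t0} in lborel. k x * w (t0 - x) \<le> C * M * exp (g * t0) * exp (- g * x)"
      using kb AE_lborel_singleton[of 0]
    proof eventually_elim
      case (elim x)
      show ?case
      proof
        assume x: "x \<in> {0..t0}"
        then have kx: "0 \<le> k x" "k x \<le> C" using elim by auto
        have y: "t0 - x \<in> {0..T}" using x t0 by auto
        have "w (t0 - x) \<le> M * exp (g * (t0 - x))" by (rule wle[OF y])
        also have "\<dots> = M * exp (g * t0) * exp (- g * x)"
          by (simp add: exp_add[symmetric] algebra_simps)
        finally have w1: "w (t0 - x) \<le> M * exp (g * t0) * exp (- g * x)" .
        have "k x * w (t0 - x) \<le> C * (M * exp (g * t0) * exp (- g * x))"
          by (rule mult_mono[OF kx(2) w1 C wnn[OF y]])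
        then show "k x * w (t0 - x) \<le> C * M * exp (g * t0) * exp (- g * x)"
          by (simp add: mult.assoc)
      qed
    qed
  qed
  also have "\<dots> = (C * M * exp (g * t0)) * ((1 - exp (- g * t0)) / g)"
    using exp_integral[OF g, of t0] t0 by simp
  also have "\<dots> \<le> (C * M * exp (g * t0)) * (1 / g)"
    using C M0 g by (intro mult_left_mono divide_right_mono) auto
  finally have I: "(LINT a:{0..t0}|lborel. k a * w (t0 - a)) \<le> C * M * exp (g * t0) / g" by simp
  have "w t0 \<le> L * (C * M * exp (g * t0) / g)"
    using ineq[OF t0] mult_left_mono[OF I L] by linarith
  then have "exp (- g * t0) * w t0 \<le> exp (- g * t0) * (L * (C * M * exp (g * t0) / g))"
    by (rule mult_left_mono) auto
  also have "\<dots> = L * C * M / g" by (simp add: exp_minus_inverse[symmetric] exp_add[symmetric] field_simps)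
  finally have "M \<le> L * C * M / g" by (simp add: M_def v_def)
  then have "M * g \<le> L * C * M" using g by (simp add: field_simps)
  then have "M \<le> 0" unfolding g_def by (simp add: algebra_simps)
  then have "w s \<le> 0" using wle[OF s] by (smt (verit) exp_gt_zero mult_nonpos_nonneg)
  then show ?thesis using wnn[OF s] by simp
qed



lemma K_mono:
  fixes k g1 g2 :: "real \<Rightarrow> real"
  assumes k: "k \<in> borel_measurable lborel" and kb: "AE a in lborel. a > 0 \<longrightarrow> 0 \<le> k a \<and> k a \<le> C"
    and g1: "continuous_on {0..t} g1" and g2: "continuous_on {0..t} g2"
    and le: "\<And>s. s \<in> {0..t} \<Longrightarrow> g1 s \<le> g2 s"
  shows "(LINT a:{0..t}|lborel. k a * g1 (t - a)) \<le> (LINT a:{0..t}|lborel. k a * g2 (t - a))"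
proof -
  have kb': "AE a in lborel. a > 0 \<longrightarrow> \<bar>k a\<bar> \<le> C" using kb by eventually_elim auto
  show ?thesis
  proof (rule set_integral_mono_AE[OF conv_integrable[OF k kb' g1] conv_integrable[OF k kb' g2]])
    show "AE x\<in>{0..t} in lborel. k x * g1 (t - x) \<le> k x * g2 (t - x)"
      using kb AE_lborel_singleton[of 0]
    proof eventually_elim
      case (elim x)
      show ?case
      proof
        assume x: "x \<in> {0..t}"
        then have "0 \<le> k x" using elim by auto
        moreover have "g1 (t - x) \<le> g2 (t - x)" using le x by auto
        ultimately show "k x * g1 (t - x) \<le> k x * g2 (t - x)" by (rule mult_left_mono[rotated])
      qed
    qed
  qed
qed

lemma compare:
  fixes k p q :: "real \<Rightarrow> real"
  assumes k: "k \<in> borel_measurable lborel" and kb: "AE a in lborel. a > 0 \<longrightarrow> 0 \<le> k a \<and> k a \<le> C"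
    and C: "C \<ge> 0" and L: "L \<ge> 0"
    and p: "continuous_on {0..T} p" and q: "continuous_on {0..T} q"
    and ineq: "\<And>t. t \<in> {0..T} \<Longrightarrow> q t < p t \<Longrightarrow>
        p t - q t \<le> L * ((LINT a:{0..t}|lborel. k a * p (t - a)) - (LINT a:{0..t}|lborel. k a * q (t - a)))"
    and s: "s \<in> {0..T}"
  shows "p s \<le> q s"
proof -
  define w where "w t = max (p t - q t) 0" for t
  have kb': "AE a in lborel. a > 0 \<longrightarrow> \<bar>k a\<bar> \<le> C" using kb by eventually_elim auto
  have wc: "continuous_on {0..T} w" unfolding w_def by (intro continuous_intros p q)
  have "w s = 0"
  proof (rule gronwall_conv[OF k kb C L wc _ _ s])
    show "0 \<le> w t" for t by (simp add: w_def)
    fix t assume t: "t \<in> {0..T}"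
    have sub: "{0..t} \<subseteq> {0..T}" using t by auto
    have pt: "continuous_on {0..t} p" and qt: "continuous_on {0..t} q" and wt: "continuous_on {0..t} w"
      using continuous_on_subset[OF p sub] continuous_on_subset[OF q sub] continuous_on_subset[OF wc sub] by auto
    have pqt: "continuous_on {0..t} (\<lambda>s. p s - q s)" by (intro continuous_intros pt qt)
    have K0: "0 \<le> (LINT a:{0..t}|lborel. k a * w (t - a))"
      using K_mono[OF k kb continuous_on_const wt, of 0] by (simp add: w_def)
    show "w t \<le> L * (LINT a:{0..t}|lborel. k a * w (t - a))"
    proof (cases "q t < p t")
      case False
      then have "w t = 0" by (simp add: w_def)
      then show ?thesis using K0 L by simp
    next
      case True
      have "(LINT a:{0..t}|lborel. k a * p (t - a)) - (LINT a:{0..t}|lborel. k a * q (t - a))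
            = (LINT a:{0..t}|lborel. k a * p (t - a) - k a * q (t - a))"
        by (rule set_integral_diff(2)[symmetric, OF conv_integrable[OF k kb' pt] conv_integrable[OF k kb' qt]])
      also have "\<dots> = (LINT a:{0..t}|lborel. k a * (p (t - a) - q (t - a)))"
        by (simp add: right_diff_distrib)
      also have "\<dots> \<le> (LINT a:{0..t}|lborel. k a * w (t - a))"
        using K_mono[OF k kb pqt wt] by (simp add: w_def)
      finally have "L * ((LINT a:{0..t}|lborel. k a * p (t - a)) - (LINT a:{0..t}|lborel. k a * q (t - a)))
          \<le> L * (LINT a:{0..t}|lborel. k a * w (t - a))" by (rule mult_left_mono[OF _ L])
      moreover have "w t = p t - q t" using True by (simp add: w_def)
      ultimately show ?thesis using ineq[OF t True] by linarith
    qed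
  qed
  then show ?thesis by (simp add: w_def)
qed

lemma AE_shift:
  fixes t :: real
  assumes "AE x in lborel. P x"
  shows "AE x in lborel. P (x - t)"
proof -
  obtain N0 where N0: "{x \<in> space lborel. \<not> P x} \<subseteq> N0" "emeasure lborel N0 = 0" "N0 \<in> sets lborel"
    using assms by (auto elim!: AE_E)
  have m: "(\<lambda>x::real. - t + x) \<in> measurable lborel borel" by simp
  have "emeasure lborel ((\<lambda>x. - t + x) -` N0 \<inter> space lborel) = emeasure (distr lborel borel ((+) (- t))) N0"
  proof (subst emeasure_distr)
    show "(+) (- t) \<in> measurable lborel borel" by simp
    show "N0 \<in> sets borel" using N0(3) by simp
  qed (simp add: add.commute)
  also have "\<dots> = 0" using N0(2) by (simp add: lborel_distr_plus)
  finally have z: "emeasure lborel ((\<lambda>x. - t + x) -` N0 \<inter> space lborel) = 0" .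
  show ?thesis
  proof (rule AE_I[OF _ z])
    show "{x \<in> space lborel. \<not> P (x - t)} \<subseteq> (\<lambda>x. - t + x) -` N0 \<inter> space lborel"
      using N0(1) by auto
    show "(\<lambda>x. - t + x) -` N0 \<inter> space lborel \<in> sets lborel"
      using measurable_sets[OF m, of N0] N0(3) by simp
  qed
qed



lemma u0_shift:
  fixes u0 :: "real \<Rightarrow> real" and t :: real
  assumes u: "set_integrable lborel {0<..} u0"
  shows "set_integrable lborel {t..} (\<lambda>a. u0 (a - t))"
    and "(LINT a:{t..}|lborel. u0 (a - t)) = (LINT a:{0<..}|lborel. u0 a)"
proof -
  define f where "f x = indicator {0..} x *\<^sub>R u0 x" for x :: real
  define g where "g x = indicator {0<..} x *\<^sub>R u0 x" for x :: real
  have gi: "integrable lborel g" using u unfolding set_integrable_def g_def by simp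
  have gm: "g \<in> borel_measurable lborel" using borel_measurable_integrable[OF gi] .
  have feq: "f = (\<lambda>x. g x + indicator {0} x * u0 0)"
    by (auto simp: f_def g_def indicator_def fun_eq_iff)
  have fm: "f \<in> borel_measurable lborel" unfolding feq using gm by measurable
  have ae: "AE x in lborel. g x = f x" using AE_lborel_singleton[of 0]
    by eventually_elim (auto simp: f_def g_def indicator_def)
  have fi: "integrable lborel f" by (rule integrable_cong_AE_imp[OF gi fm ae])
  have fg: "integral\<^sup>L lborel f = integral\<^sup>L lborel g"
    by (rule integral_cong_AE[OF fm gm]) (use ae in \<open>eventually_elim, simp\<close>)
  have sh: "(\<lambda>x. f (- t + 1 * x)) = (\<lambda>x. indicator {t..} x *\<^sub>R u0 (x - t))"
    by (auto simp: f_def indicator_def fun_eq_iff)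
  show "set_integrable lborel {t..} (\<lambda>a. u0 (a - t))"
    unfolding set_integrable_def sh[symmetric]
    using lborel_integrable_real_affine_iff[of 1 f "-t"] fi by simp
  have "(LINT a:{t..}|lborel. u0 (a - t)) = integral\<^sup>L lborel (\<lambda>x. f (- t + 1 * x))"
    unfolding set_lebesgue_integral_def sh by simp
  also have "\<dots> = integral\<^sup>L lborel f"
    using lborel_integral_real_affine[of 1 f "-t"] by simp
  also have "\<dots> = (LINT a:{0<..}|lborel. u0 a)"
    unfolding fg set_lebesgue_integral_def g_def by simp
  finally show "(LINT a:{t..}|lborel. u0 (a - t)) = (LINT a:{0<..}|lborel. u0 a)" .
qed

lemma not_AE_nonpos: "\<not> (AE a in lborel. (a::real) \<le> 0)"
proof
  assume "AE a in lborel. (a::real) \<le> 0"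
  then obtain N where N: "{x \<in> space lborel. \<not> x \<le> (0::real)} \<subseteq> N" "emeasure lborel N = 0" "N \<in> sets lborel"
    by (auto elim!: AE_E)
  have "{0<..1::real} \<subseteq> N" using N(1) by auto
  then have "emeasure lborel {0<..1::real} \<le> emeasure lborel N" using N(3) by (intro emeasure_mono) auto
  then show False using N(2) by simp
qed

lemma Linf_facts:
  fixes \<beta> :: "real \<Rightarrow> real"
  assumes bdd: "\<exists>C. AE a in lborel. a > 0 \<longrightarrow> \<bar>\<beta> a\<bar> \<le> C"
  shows "Linf_norm \<beta> \<ge> 0" and "AE a in lborel. a > 0 \<longrightarrow> \<bar>\<beta> a\<bar> \<le> Linf_norm \<beta>"
proof -
  define A where "A = {C. AE a in lborel. a > 0 \<longrightarrow> \<bar>\<beta> a\<bar> \<le> C}"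
  have ne: "A \<noteq> {}" using bdd by (auto simp: A_def)
  have lb: "0 \<le> c" if c: "c \<in> A" for c
  proof (rule ccontr)
    assume "\<not> 0 \<le> c"
    then have "AE a in lborel. (a::real) \<le> 0" using c unfolding A_def
      by (auto elim!: eventually_mono)
    then show False using not_AE_nonpos by simp
  qed
  have bb: "bdd_below A" using lb by (intro bdd_belowI[of _ 0]) auto
  have N: "Linf_norm \<beta> = Inf A" by (simp add: Linf_norm_def A_def)
  show "Linf_norm \<beta> \<ge> 0" unfolding N by (rule cInf_greatest[OF ne lb])
  have "AE a in lborel. a > 0 \<longrightarrow> \<bar>\<beta> a\<bar> \<le> Inf A + inverse (real (Suc n))" for n
  proof -
    have "Inf A < Inf A + inverse (real (Suc n))" by simp
    then obtain c where c: "c \<in> A" "c < Inf A + inverse (real (Suc n))"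
      using cInf_less_iff[OF ne bb] by blast
    then show ?thesis unfolding A_def by (auto elim!: eventually_mono)
  qed
  then have "AE a in lborel. \<forall>n. a > 0 \<longrightarrow> \<bar>\<beta> a\<bar> \<le> Inf A + inverse (real (Suc n))"
    by (subst AE_all_countable) auto
  then show "AE a in lborel. a > 0 \<longrightarrow> \<bar>\<beta> a\<bar> \<le> Linf_norm \<beta>"
  proof eventually_elim
    case (elim a)
    show ?case
    proof
      assume a: "a > 0"
      show "\<bar>\<beta> a\<bar> \<le> Linf_norm \<beta>"
      proof (rule ccontr)
        assume "\<not> ?thesis"
        then have "0 < \<bar>\<beta> a\<bar> - Inf A" unfolding N by simp
        then obtain n where "inverse (real (Suc n)) < \<bar>\<beta> a\<bar> - Inf A"
          using reals_Archimedean by blast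
        moreover have "\<bar>\<beta> a\<bar> \<le> Inf A + inverse (real (Suc n))" using elim a by blast
        ultimately show False by linarith
      qed
    qed
  qed
qed

lemma f_ricker_le_id: "f_ricker x \<le> x"
proof (cases "x \<ge> 0")
  case True
  then show ?thesis unfolding f_ricker_def by (intro mult_left_le) auto
next
  case False
  then have "exp (- x) \<ge> 1" by simp
  then have "x * exp (- x) \<le> x * 1" using False by (intro mult_left_mono_neg) auto
  then show ?thesis by (simp add: f_ricker_def)
qed

lemma f_ricker_le_1: "x \<ge> 0 \<Longrightarrow> f_ricker x \<le> 1"
proof -
  assume x: "x \<ge> 0"
  have "x \<le> exp x" using exp_ge_add_one_self[of x] by linarith
  then show ?thesis unfolding f_ricker_def by (simp add: exp_minus field_simps)
qed

lemma f_ricker_le_sup: "x \<ge> 0 \<Longrightarrow> f_ricker x \<le> (SUP x\<in>{0..}. f_ricker x)"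
  by (rule cSUP_upper) (auto intro!: bdd_aboveI2[where M=1] f_ricker_le_1)

lemma J_bounds:
  fixes \<beta> u0 :: "real \<Rightarrow> real"
  assumes beta_nonneg: "AE a in lborel. a > 0 \<longrightarrow> \<beta> a \<ge> 0"
    and Nb: "AE a in lborel. a > 0 \<longrightarrow> \<bar>\<beta> a\<bar> \<le> N" and N: "N \<ge> 0"
    and u0_int: "set_integrable lborel {0<..} u0"
    and u0_nonneg: "AE a in lborel. a > 0 \<longrightarrow> u0 a \<ge> 0"
    and t: "t \<ge> 0"
  shows "0 \<le> (LINT a:{t..}|lborel. \<beta> a * exp (- \<mu> * t) * u0 (a - t))"
    and "(LINT a:{t..}|lborel. \<beta> a * exp (- \<mu> * t) * u0 (a - t)) \<le> N * exp (- \<mu> * t) * (LINT a:{0<..}|lborel. u0 a)"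
proof -
  have sh: "AE x in lborel. x - t > 0 \<longrightarrow> u0 (x - t) \<ge> 0" by (rule AE_shift[OF u0_nonneg])
  have U0: "0 \<le> (LINT a:{0<..}|lborel. u0 a)"
    unfolding set_lebesgue_integral_def
    by (rule integral_nonneg_AE) (use u0_nonneg in \<open>eventually_elim, auto simp: indicator_def\<close>)
  show "0 \<le> (LINT a:{t..}|lborel. \<beta> a * exp (- \<mu> * t) * u0 (a - t))"
    unfolding set_lebesgue_integral_def
  proof (rule integral_nonneg_AE)
    show "AE x in lborel. 0 \<le> indicator {t..} x *\<^sub>R (\<beta> x * exp (- \<mu> * t) * u0 (x - t))"
      using beta_nonneg sh AE_lborel_singleton[of 0] AE_lborel_singleton[of t]
    proof eventually_elim
      case (elim x)
      show ?case
      proof (cases "x \<ge> t")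
        case True
        then have "x > 0" "x - t > 0" using elim t by auto
        then show ?thesis using True elim by (auto intro!: mult_nonneg_nonneg)
      qed auto
    qed
  qed
  show "(LINT a:{t..}|lborel. \<beta> a * exp (- \<mu> * t) * u0 (a - t)) \<le> N * exp (- \<mu> * t) * (LINT a:{0<..}|lborel. u0 a)"
  proof (cases "set_integrable lborel {t..} (\<lambda>a. \<beta> a * exp (- \<mu> * t) * u0 (a - t))")
    case True
    have i2: "set_integrable lborel {t..} (\<lambda>a. (N * exp (- \<mu> * t)) * u0 (a - t))"
      using u0_shift(1)[OF u0_int, of t] by simp
    have "(LINT a:{t..}|lborel. \<beta> a * exp (- \<mu> * t) * u0 (a - t)) \<le> (LINT a:{t..}|lborel. (N * exp (- \<mu> * t)) * u0 (a - t))"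
    proof (rule set_integral_mono_AE[OF True i2])
      show "AE x\<in>{t..} in lborel. \<beta> x * exp (- \<mu> * t) * u0 (x - t) \<le> N * exp (- \<mu> * t) * u0 (x - t)"
        using Nb sh AE_lborel_singleton[of 0] AE_lborel_singleton[of t]
      proof eventually_elim
        case (elim x)
        show ?case
        proof
          assume "x \<in> {t..}"
          then have "x > 0" "x - t > 0" using elim t by auto
          then have "\<beta> x \<le> N" "u0 (x - t) \<ge> 0" using elim by auto
          then show "\<beta> x * exp (- \<mu> * t) * u0 (x - t) \<le> N * exp (- \<mu> * t) * u0 (x - t)"
            by (intro mult_right_mono) auto
        qed
      qed
    qed
    also have "\<dots> = N * exp (- \<mu> * t) * (LINT a:{0<..}|lborel. u0 a)"
      using u0_shift(2)[OF u0_int, of t] by simp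
    finally show ?thesis .
  next
    case False
    then have "(LINT a:{t..}|lborel. \<beta> a * exp (- \<mu> * t) * u0 (a - t)) = 0"
      unfolding set_lebesgue_integral_def set_integrable_def by (rule not_integrable_integral_eq)
    then show ?thesis using N U0 by simp
  qed
qed



theorem theorem3p1:
  fixes \<mu> \<alpha> :: real and \<beta> u0 b bp bm :: "real \<Rightarrow> real"
  assumes mu_pos: "\<mu> > 0" and alpha_pos: "\<alpha> > 0"
    and beta_meas: "\<beta> \<in> borel_measurable lborel"
    and beta_nonneg: "AE a in lborel. a > 0 \<longrightarrow> \<beta> a \<ge> 0"
    and beta_bdd: "\<exists>C. AE a in lborel. a > 0 \<longrightarrow> \<bar>\<beta> a\<bar> \<le> C"
    and beta_norm: "(LINT a:{0..}|lborel. \<beta> a * exp (- \<mu> * a)) = 1"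
    and u0_int: "set_integrable lborel {0<..} u0"
    and u0_nonneg: "AE a in lborel. a > 0 \<longrightarrow> u0 a \<ge> 0"
    and b_sol: "is_birth_rate (\<lambda>x. \<alpha> * f_ricker x) \<mu> \<beta> u0 b"
    and bp_sol: "is_birth_rate (\<lambda>x. \<alpha> * 1 * x) \<mu> \<beta> u0 bp"
    and bm_sol: "is_birth_rate
           (\<lambda>x. \<alpha> * exp (- (Linf_norm \<beta> *
                 max (LINT a:{0<..}|lborel. u0 a) (\<alpha> / \<mu> * (SUP x\<in>{0..}. f_ricker x)))) * x)
           \<mu> \<beta> u0 bm"
  shows "\<forall>t\<ge>0. AE a in lborel. a \<ge> 0 \<longrightarrow>
           age_sol \<mu> u0 bm t a \<le> age_sol \<mu> u0 b t a \<and> age_sol \<mu> u0 b t a \<le> age_sol \<mu> u0 bp t a"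
proof -
  obtain Cb where Cb: "AE a in lborel. a > 0 \<longrightarrow> \<bar>\<beta> a\<bar> \<le> Cb" using beta_bdd by blast
  define C where "C = max Cb 0"
  have C0: "C \<ge> 0" by (simp add: C_def)
  define k where "k a = \<beta> a * exp (- \<mu> * a)" for a
  have km: "k \<in> borel_measurable lborel" unfolding k_def using beta_meas by measurable
  have kb: "AE a in lborel. a > 0 \<longrightarrow> 0 \<le> k a \<and> k a \<le> C"
    using beta_nonneg Cb
  proof eventually_elim
    case (elim a)
    show ?case
    proof
      assume a: "a > 0"
      then have b0: "0 \<le> \<beta> a" and b1: "\<beta> a \<le> Cb" using elim by auto
      have e: "exp (- \<mu> * a) \<le> 1" using a mu_pos by simp
      have "k a \<le> \<beta> a" unfolding k_def by (rule mult_left_le[OF e b0])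
      then show "0 \<le> k a \<and> k a \<le> C" using b0 b1 by (auto simp: k_def C_def)
    qed
  qed
  have kb': "AE a in lborel. a > 0 \<longrightarrow> \<bar>k a\<bar> \<le> C" using kb by eventually_elim auto
  define J where "J t = (LINT a:{t..}|lborel. \<beta> a * exp (- \<mu> * t) * u0 (a - t))" for t
  define K where "K g t = (LINT a:{0..t}|lborel. k a * g (t - a))" for g :: "real \<Rightarrow> real" and t
  have BI: "birth_input \<beta> \<mu> u0 g t = J t + K g t" for g t
    by (simp add: birth_input_def J_def K_def k_def)
  define N where "N = Linf_norm \<beta>"
  have N0: "N \<ge> 0" and Nb: "AE a in lborel. a > 0 \<longrightarrow> \<bar>\<beta> a\<bar> \<le> N"
    using Linf_facts[OF beta_bdd] by (auto simp: N_def)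
  define S where "S = (SUP x\<in>{0..}. f_ricker x)"
  define U0 where "U0 = (LINT a:{0<..}|lborel. u0 a)"
  define \<Lambda> where "\<Lambda> = \<alpha> / \<mu> * S"
  define R0 where "R0 = N * max U0 \<Lambda>"
  define \<delta> where "\<delta> = exp (- R0)"
  have J0: "0 \<le> J t" if "t \<ge> 0" for t
    unfolding J_def by (rule J_bounds(1)[OF beta_nonneg Nb N0 u0_int u0_nonneg that])
  have Jup: "J t \<le> N * exp (- \<mu> * t) * U0" if "t \<ge> 0" for t
    unfolding J_def U0_def by (rule J_bounds(2)[OF beta_nonneg Nb N0 u0_int u0_nonneg that])
  have bc: "continuous_on {0..} b" and beq: "\<And>t. t \<ge> 0 \<Longrightarrow> b t = \<alpha> * f_ricker (J t + K b t)"
    using b_sol by (auto simp: is_birth_rate_def BI)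
  have bpc: "continuous_on {0..} bp" and bpeq: "\<And>t. t \<ge> 0 \<Longrightarrow> bp t = \<alpha> * (J t + K bp t)"
    using bp_sol by (auto simp: is_birth_rate_def BI)
  have bmc: "continuous_on {0..} bm" and bmeq: "\<And>t. t \<ge> 0 \<Longrightarrow> bm t = \<alpha> * \<delta> * (J t + K bm t)"
    using bm_sol by (auto simp: is_birth_rate_def BI \<delta>_def R0_def N_def U0_def \<Lambda>_def S_def)
  have cT: "continuous_on {0..T} g" if "continuous_on {0..} g" for g :: "real \<Rightarrow> real" and T
    using that by (rule continuous_on_subset) auto
  have Kbnd: "\<And>t. continuous_on {0..t} g \<Longrightarrow> set_integrable lborel {0..t} (\<lambda>a. k a * g (t - a))" for g
    by (rule conv_integrable[OF km kb'])
  have bnn: "0 \<le> b s" if s: "s \<ge> 0" for s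
  proof -
    have hc: "continuous_on {0..s} b" by (rule cT[OF bc])
    obtain B where "\<forall>x\<in>b ` {0..s}. norm x \<le> B"
      using compact_imp_bounded[OF compact_continuous_image[OF hc compact_Icc]]
      unfolding bounded_iff by blast
    then have B: "\<And>x. x \<in> {0..s} \<Longrightarrow> \<bar>b x\<bar> \<le> B" by auto
    have B0: "B \<ge> 0" using B[of 0] s by auto
    define E where "E = exp (C * B * s)"
    have Kb_lb: "- (C * B * t) \<le> K b t" if t: "t \<in> {0..s}" for t
    proof -
      have i1: "set_integrable lborel {0..t} (\<lambda>a. - (C * B))" by (rule cont_set_integrable) simp
      have i2: "set_integrable lborel {0..t} (\<lambda>a. k a * b (t - a))" by (rule Kbnd[OF cT[OF bc]])
      have "(LINT a:{0..t}|lborel. - (C * B)) \<le> (LINT a:{0..t}|lborel. k a * b (t - a))"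
      proof (rule set_integral_mono_AE[OF i1 i2])
        show "AE x\<in>{0..t} in lborel. - (C * B) \<le> k x * b (t - x)"
          using kb' AE_lborel_singleton[of 0]
        proof eventually_elim
          case (elim x)
          show ?case
          proof
            assume x: "x \<in> {0..t}"
            then have "\<bar>k x\<bar> \<le> C" using elim by auto
            moreover have "\<bar>b (t - x)\<bar> \<le> B" using B x t by auto
            ultimately have "\<bar>k x\<bar> * \<bar>b (t - x)\<bar> \<le> C * B" by (intro mult_mono) auto
            then have "\<bar>k x * b (t - x)\<bar> \<le> C * B" by (simp add: abs_mult)
            then show "- (C * B) \<le> k x * b (t - x)" by linarith
          qed
        qed
      qed
      moreover have "(LINT a:{0..t}|lborel. - (C * B)) = - (C * B * t)"
        using t by (subst set_integral_const) auto
      ultimately show ?thesis by (simp add: K_def)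
    qed
    have L0: "\<alpha> * E \<ge> 0" using alpha_pos by (simp add: E_def)
    have "(\<lambda>_. 0) s \<le> b s"
    proof (rule compare[OF km kb C0 L0 continuous_on_const hc])
      show "s \<in> {0..s}" using s by simp
      fix t assume t: "t \<in> {0..s}" and neg: "b t < 0"
      define I where "I = J t + K b t"
      have bt: "b t = \<alpha> * (I * exp (- I))" using beq[of t] t by (simp add: I_def f_ricker_def)
      have Ineg: "I < 0"
      proof (rule ccontr)
        assume "\<not> I < 0"
        then have "0 \<le> \<alpha> * (I * exp (- I))" using alpha_pos by simp
        then show False using bt neg by simp
      qed
      have "- I \<le> - K b t" using J0[of t] t by (simp add: I_def)
      have "- K b t \<le> C * B * s"
      proof -
        have "C * B * t \<le> C * B * s" using t C0 B0 by (intro mult_left_mono) auto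
        then show ?thesis using Kb_lb[OF t] by linarith
      qed
      have e: "exp (- I) \<le> E" unfolding E_def using \<open>- I \<le> - K b t\<close> \<open>- K b t \<le> C * B * s\<close> by simp
      have "(- I) * exp (- I) \<le> (- K b t) * E"
        using \<open>- I \<le> - K b t\<close> e Ineg by (intro mult_mono) auto
      then have "0 - b t \<le> \<alpha> * E * (0 - K b t)"
        using alpha_pos bt by (simp add: algebra_simps mult_left_mono)
      then show "0 - b t \<le> \<alpha> * E * ((LINT a:{0..t}|lborel. k a * 0) - (LINT a:{0..t}|lborel. k a * b (t - a)))"
        by (simp add: K_def)
    qed
    then show ?thesis by simp
  qed
  have upper: "b s \<le> bp s" if s: "s \<ge> 0" for s
  proof (rule compare[OF km kb C0 _ cT[OF bc] cT[OF bpc]])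
    show "0 \<le> \<alpha>" using alpha_pos by simp
    show "s \<in> {0..s}" using s by simp
    fix t assume t: "t \<in> {0..s}"
    have "b t \<le> \<alpha> * (J t + K b t)"
      using beq[of t] t f_ricker_le_id[of "J t + K b t"] alpha_pos by (simp add: mult_left_mono)
    then have "b t - bp t \<le> \<alpha> * (K b t - K bp t)"
      using bpeq[of t] t by (simp add: algebra_simps)
    then show "b t - bp t \<le> \<alpha> * ((LINT a:{0..t}|lborel. k a * b (t - a)) - (LINT a:{0..t}|lborel. k a * bp (t - a)))"
      by (simp add: K_def)
  qed
  have Kbnn: "0 \<le> K b t" if t: "t \<ge> 0" for t
  proof -
    have "(LINT a:{0..t}|lborel. k a * 0) \<le> (LINT a:{0..t}|lborel. k a * b (t - a))"
      by (rule K_mono[OF km kb continuous_on_const cT[OF bc]]) (use bnn in auto)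
    then show ?thesis by (simp add: K_def)
  qed
  have S0: "0 \<le> S" using f_ricker_le_sup[of 0] by (simp add: S_def f_ricker_def)
  have bS: "b t \<le> \<alpha> * S" if t: "t \<ge> 0" for t
  proof -
    have "f_ricker (J t + K b t) \<le> S" unfolding S_def
      by (rule f_ricker_le_sup) (use J0[OF t] Kbnn[OF t] in simp)
    then show ?thesis using beq[OF t] alpha_pos by simp
  qed
  have Kbup: "K b t \<le> N * \<Lambda> * (1 - exp (- \<mu> * t))" if t: "t \<ge> 0" for t
  proof -
    have i1: "set_integrable lborel {0..t} (\<lambda>a. k a * b (t - a))" by (rule Kbnd[OF cT[OF bc]])
    have i2: "set_integrable lborel {0..t} (\<lambda>a. (N * \<alpha> * S) * exp (- \<mu> * a))"
      by (rule cont_set_integrable) (intro continuous_intros)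
    have "(LINT a:{0..t}|lborel. k a * b (t - a)) \<le> (LINT a:{0..t}|lborel. (N * \<alpha> * S) * exp (- \<mu> * a))"
    proof (rule set_integral_mono_AE[OF i1 i2])
      show "AE x\<in>{0..t} in lborel. k x * b (t - x) \<le> N * \<alpha> * S * exp (- \<mu> * x)"
        using Nb AE_lborel_singleton[of 0]
      proof eventually_elim
        case (elim x)
        show ?case
        proof
          assume x: "x \<in> {0..t}"
          then have "\<beta> x \<le> N" using elim by auto
          then have k1: "k x \<le> N * exp (- \<mu> * x)" unfolding k_def by (intro mult_right_mono) auto
          have tx: "t - x \<ge> 0" using x by auto
          have "k x * b (t - x) \<le> (N * exp (- \<mu> * x)) * (\<alpha> * S)"
            by (rule mult_mono[OF k1 bS[OF tx]]) (use N0 bnn[OF tx] in auto)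
          then show "k x * b (t - x) \<le> N * \<alpha> * S * exp (- \<mu> * x)" by (simp add: algebra_simps)
        qed
      qed
    qed
    also have "\<dots> = (N * \<alpha> * S) * ((1 - exp (- \<mu> * t)) / \<mu>)"
      using exp_integral[OF mu_pos t] by simp
    also have "\<dots> = N * \<Lambda> * (1 - exp (- \<mu> * t))" by (simp add: \<Lambda>_def)
    finally show ?thesis by (simp add: K_def)
  qed
  have blow: "\<alpha> * \<delta> * (J t + K b t) \<le> b t" if t: "t \<ge> 0" for t
  proof -
    define I where "I = J t + K b t"
    define e where "e = exp (- \<mu> * t)"
    have I0: "0 \<le> I" using J0[OF t] Kbnn[OF t] by (simp add: I_def)
    have e1: "e \<le> 1" and e0: "0 \<le> e" using t mu_pos by (auto simp: e_def)
    have "I \<le> N * e * U0 + N * \<Lambda> * (1 - e)" using Jup[OF t] Kbup[OF t] by (simp add: I_def e_def)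
    also have "\<dots> = N * (e * U0 + (1 - e) * \<Lambda>)" by (simp add: algebra_simps)
    also have "\<dots> \<le> N * max U0 \<Lambda>"
    proof (rule mult_left_mono[OF _ N0])
      have "e * U0 \<le> e * max U0 \<Lambda>" using e0 by (intro mult_left_mono) auto
      moreover have "(1 - e) * \<Lambda> \<le> (1 - e) * max U0 \<Lambda>" using e1 by (intro mult_left_mono) auto
      ultimately show "e * U0 + (1 - e) * \<Lambda> \<le> max U0 \<Lambda>" by (simp add: algebra_simps)
    qed
    finally have IR: "I \<le> R0" by (simp add: R0_def)
    have "I * \<delta> \<le> I * exp (- I)" unfolding \<delta>_def using IR I0 by (intro mult_left_mono) auto
    then have "\<alpha> * (I * \<delta>) \<le> \<alpha> * f_ricker I" using alpha_pos by (simp add: f_ricker_def)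
    then show ?thesis using beq[OF t] by (simp add: I_def algebra_simps)
  qed
  have lower: "bm s \<le> b s" if s: "s \<ge> 0" for s
  proof (rule compare[OF km kb C0 _ cT[OF bmc] cT[OF bc]])
    show "0 \<le> \<alpha> * \<delta>" using alpha_pos by (simp add: \<delta>_def)
    show "s \<in> {0..s}" using s by simp
    fix t assume t: "t \<in> {0..s}"
    have "bm t - b t \<le> \<alpha> * \<delta> * (K bm t - K b t)"
      using bmeq[of t] blow[of t] t by (simp add: algebra_simps)
    then show "bm t - b t \<le> \<alpha> * \<delta> * ((LINT a:{0..t}|lborel. k a * bm (t - a)) - (LINT a:{0..t}|lborel. k a * b (t - a)))"
      by (simp add: K_def)
  qed
  show ?thesis
  proof (rule allI, rule impI, rule AE_I2)
    fix t a :: real assume t: "t \<ge> 0"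
    show "a \<ge> 0 \<longrightarrow> age_sol \<mu> u0 bm t a \<le> age_sol \<mu> u0 b t a \<and> age_sol \<mu> u0 b t a \<le> age_sol \<mu> u0 bp t a"
    proof (cases "t \<le> a")
      case True
      then show ?thesis by (simp add: age_sol_def)
    next
      case False
      then have ta: "t - a \<ge> 0" by simp
      have "exp (- \<mu> * a) * bm (t - a) \<le> exp (- \<mu> * a) * b (t - a)"
        using lower[OF ta] by (intro mult_left_mono) auto
      moreover have "exp (- \<mu> * a) * b (t - a) \<le> exp (- \<mu> * a) * bp (t - a)"
        using upper[OF ta] by (intro mult_left_mono) auto
      ultimately show ?thesis using False by (simp add: age_sol_def)
    qed
  qed
qed


end
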